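(* Let $s>2$ be an integer, $A_s=\{0,1,\dots,s-1\}$, and let $A_0,A_1$ be disjoint subsets of $A_s$ with $A_0\cup A_1=A_s$, $A_0\neq A_s\neq A_1$. Let $f:[0,1]\to[0,1]$ be defined by $$f\big(\Delta^{s*}_{\alpha_1\alpha_2\dots\alpha_n\dots}\big)=\Delta^{2*}_{\beta_1\beta_2\dots\beta_n\dots},$$ where $\beta_1=0$ if $\alpha_1\in A_0$, $\beta_1=1$ if $\alpha_1\in A_1$, and for $n\ge 1$, $\beta_{n+1}=\beta_n$ if $\alpha_{n+1}=\alpha_n$ and $\beta_{n+1}=1-\beta_n$ if $\alpha_{n+1}\neq\alpha_n$. Then: (i) the range of $f$ is $f([0,1])=[0,1]$; (ii) the image under $f$ of every $s*$-cylinder $\Delta^{s*}_{c_1\dots c_m}$ is a $2*$-cylinder; (iii) $f$ has finite level sets and level sets of the cardinality of the continuum, i.e. there exists $y\in[0,1]$ with $f^{-1}(y)$ nonempty and finite, and there exists $y\in[0,1]$ with $f^{-1}(y)$ of cardinality of the continuum.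
   Context: $L_s=A_s\times A_s\times\cdots$ denotes the space of sequences $(\alpha_n)$ with $\alpha_n\in A_s$. The $s*$-representation is an encoding of $[0,1]$ topologically equivalent to the classical $s$-adic one: there is a continuous strictly monotone surjection $h_s:[0,1]\to[0,1]$ such that $\Delta^{s*}_{\alpha_1\alpha_2\dots}=h_s\big(\sum_{n\ge1}\alpha_n s^{-n}\big)$ for every $(\alpha_n)\in L_s$; a sequence $(\alpha_n)$ with $x=\Delta^{s*}_{\alpha_1\alpha_2\dots}$ is called an $s*$-code of $x$. Likewise the $2*$-representation is given by a continuous strictly monotone surjection $h_2:[0,1]\to[0,1]$ via $\Delta^{2*}_{\beta_1\beta_2\dots}=h_2\big(\sum_{n\ge1}\beta_n 2^{-n}\big)$, $\beta_n\in\{0,1\}$. An $s*$-cylinder of rank $m$ with base $c_1\dots c_m$ is $\Delta^{s*}_{c_1\dots c_m}=\{\Delta^{s*}_{c_1\dots c_m\alpha_1\alpha_2\dots}:(\alpha_n)\in L_s\}$; $2*$-cylinders $\Delta^{2*}_{\beta_1\dots\beta_m}$ are defined analogously. The value of $f(x)$ given by the formula does not depend on which $s*$-code of $x$ is used, so $f$ is a well-defined function on $[0,1]$. *)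

theory Defs
  imports "HOL-Analysis.Analysis" "HOL-Library.Equipollence"
begin

text \<open>Sequences are 0-indexed: alpha n stands for the paper's digit alpha_(n+1).\<close>

definition Ls :: "nat \<Rightarrow> (nat \<Rightarrow> nat) set" where
  "Ls s = {\<alpha>. \<forall>n. \<alpha> n < s}"

definition sval :: "nat \<Rightarrow> (nat \<Rightarrow> nat) \<Rightarrow> real" where
  "sval s \<alpha> = (\<Sum>n. real (\<alpha> n) / real s ^ Suc n)"

definition encoding_map :: "(real \<Rightarrow> real) \<Rightarrow> bool" where
  "encoding_map h \<longleftrightarrow> continuous_on {0..1} h \<and> h ` {0..1} = {0..1} \<and>
     (strict_mono_on {0..1} h \<or> (\<forall>x\<in>{0..1}. \<forall>y\<in>{0..1}. x < y \<longrightarrow> h y < h x))"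

definition DeltaS :: "(real \<Rightarrow> real) \<Rightarrow> nat \<Rightarrow> (nat \<Rightarrow> nat) \<Rightarrow> real" where
  "DeltaS hs s \<alpha> = hs (sval s \<alpha>)"

definition Delta2 :: "(real \<Rightarrow> real) \<Rightarrow> (nat \<Rightarrow> nat) \<Rightarrow> real" where
  "Delta2 h2 \<beta> = h2 (sval 2 \<beta>)"

fun beta :: "nat set \<Rightarrow> (nat \<Rightarrow> nat) \<Rightarrow> nat \<Rightarrow> nat" where
  "beta A0 \<alpha> 0 = (if \<alpha> 0 \<in> A0 then 0 else 1)"
| "beta A0 \<alpha> (Suc n) = (if \<alpha> (Suc n) = \<alpha> n then beta A0 \<alpha> n else 1 - beta A0 \<alpha> n)"

definition fmap :: "nat \<Rightarrow> (real \<Rightarrow> real) \<Rightarrow> (real \<Rightarrow> real) \<Rightarrow> nat set \<Rightarrow> real \<Rightarrow> real" where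
  "fmap s hs h2 A0 x = Delta2 h2 (beta A0 (SOME \<alpha>. \<alpha> \<in> Ls s \<and> DeltaS hs s \<alpha> = x))"

definition cylS :: "(real \<Rightarrow> real) \<Rightarrow> nat \<Rightarrow> nat list \<Rightarrow> real set" where
  "cylS hs s c = {DeltaS hs s \<alpha> | \<alpha>. \<alpha> \<in> Ls s \<and> (\<forall>i<length c. \<alpha> i = c ! i)}"

definition cyl2 :: "(real \<Rightarrow> real) \<Rightarrow> nat list \<Rightarrow> real set" where
  "cyl2 h2 b = {Delta2 h2 \<beta> | \<beta>. \<beta> \<in> Ls 2 \<and> (\<forall>i<length b. \<beta> i = b ! i)}"

end

theory Submission
  imports Defs
begin


lemma sval_summable:
  assumes "s \<ge> 2" "\<alpha> \<in> Ls s"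
  shows "summable (\<lambda>n. real (\<alpha> n) / real s ^ Suc n)"
proof (rule summable_comparison_test')
  show "summable (\<lambda>n. real s * (1 / real s) ^ Suc n)"
    using assms(1) by (intro summable_mult summable_geometric_iff[THEN iffD2, THEN summable_ignore_initial_segment[where k=1], simplified]) auto
  fix n
  have "real (\<alpha> n) \<le> real s" using assms(2) unfolding Ls_def by (simp add: less_imp_le)
  then have "real (\<alpha> n) / real s ^ Suc n \<le> real s / real s ^ Suc n"
    by (rule divide_right_mono) auto
  then show "norm (real (\<alpha> n) / real s ^ Suc n) \<le> real s * (1 / real s) ^ Suc n"
    by (simp add: power_one_over)
qed

lemma sval_nonneg: "0 \<le> sval s \<alpha>" if "s \<ge> 2" "\<alpha> \<in> Ls s"
  unfolding sval_def using sval_summable[OF that] by (intro suminf_nonneg) auto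

lemma sval_const: assumes "s \<ge> 2" shows "sval s (\<lambda>_. s - 1) = 1"
proof -
  have g: "(\<lambda>n. (1 / real s) ^ n) sums (1 / (1 - 1 / real s))"
    using assms by (intro geometric_sums) auto
  have g2: "(\<lambda>n. ((real s - 1)/ real s) * (1 / real s) ^ n) sums (((real s - 1)/ real s) * (1 / (1 - 1 / real s)))"
    by (rule sums_mult[OF g])
  have e1: "((real s - 1)/ real s) * (1 / (1 - 1 / real s)) = 1" using assms by (simp add: field_simps)
  have e2: "(\<lambda>n. real (s - 1) / real s ^ Suc n) = (\<lambda>n. ((real s - 1)/ real s) * (1 / real s) ^ n)"
    using assms by (intro ext) (simp add: power_one_over of_nat_diff)
  have "(\<lambda>n. real (s - 1) / real s ^ Suc n) sums 1" using g2 by (simp only: e1 e2)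
  then show ?thesis unfolding sval_def by (rule sums_unique[symmetric])
qed

lemma sval_zero_imp: assumes "s \<ge> 2" "\<alpha> \<in> Ls s" "sval s \<alpha> = 0" shows "\<alpha> n = 0"
proof -
  have "\<forall>n. real (\<alpha> n) / real s ^ Suc n = 0"
    using suminf_eq_zero_iff[OF sval_summable[OF assms(1,2)]] assms(3) unfolding sval_def by simp
  then show ?thesis using assms(1) by (metis of_nat_eq_0_iff divide_eq_0_iff power_not_zero not_numeral_le_zero)
qed

lemma sval_le1_and_one_imp:
  assumes "s \<ge> 2" "\<alpha> \<in> Ls s"
  shows "sval s \<alpha> \<le> 1" and "sval s \<alpha> = 1 \<Longrightarrow> \<alpha> n = s - 1"
proof -
  define \<gamma> where "\<gamma> = (\<lambda>n. s - 1 - \<alpha> n)"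
  have g: "\<gamma> \<in> Ls s" using assms unfolding \<gamma>_def Ls_def by auto
  have a: "\<alpha> n \<le> s - 1" for n
  proof -
    have "\<alpha> n < s" using assms unfolding Ls_def by auto
    then show ?thesis by arith
  qed
  have c: "\<And>n. real (\<gamma> n) / real s ^ Suc n = real (s - 1) / real s ^ Suc n - real (\<alpha> n) / real s ^ Suc n"
  proof -
    fix n
    have "real (\<gamma> n) = real (s - 1) - real (\<alpha> n)" using a[of n] unfolding \<gamma>_def by (simp add: of_nat_diff)
    then show "real (\<gamma> n) / real s ^ Suc n = real (s - 1) / real s ^ Suc n - real (\<alpha> n) / real s ^ Suc n"
      by (metis diff_divide_distrib)
  qed
  have "sval s \<gamma> = sval s (\<lambda>_. s - 1) - sval s \<alpha>"
    unfolding sval_def c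
    by (rule suminf_diff[symmetric]) (use sval_summable[OF assms(1) g] sval_summable[OF assms] sval_summable[OF assms(1), of "\<lambda>_. s - 1"] assms(1) in \<open>auto simp: Ls_def\<close>)
  then have e: "sval s \<gamma> = 1 - sval s \<alpha>" using sval_const[OF assms(1)] by simp
  show "sval s \<alpha> \<le> 1" using e sval_nonneg[OF assms(1) g] by simp
  assume "sval s \<alpha> = 1"
  then have "\<gamma> n = 0" using e sval_zero_imp[OF assms(1) g] by simp
  then show "\<alpha> n = s - 1" using a[of n] unfolding \<gamma>_def by simp
qed

lemma sval_step:
  assumes "s \<ge> 2" "\<alpha> \<in> Ls s"
  shows "sval s \<alpha> = (real (\<alpha> 0) + sval s (\<lambda>n. \<alpha> (Suc n))) / real s"
proof -
  have "sval s (\<lambda>n. \<alpha> (Suc n)) = (\<Sum>n. real (\<alpha> (Suc n)) / real s ^ Suc (Suc n)) * real s"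
    unfolding sval_def
    using assms(1) suminf_mult2[OF summable_ignore_initial_segment[OF sval_summable[OF assms], of 1], of "real s"]
    by (simp add: field_simps)
  also have "\<dots> = (sval s \<alpha> - real (\<alpha> 0) / real s) * real s"
    unfolding sval_def using suminf_split_head[OF sval_summable[OF assms]] by simp
  finally have e: "sval s (\<lambda>n. \<alpha> (Suc n)) = (sval s \<alpha> - real (\<alpha> 0) / real s) * real s" .
  have sp: "real s > 0" using assms(1) by simp
  have "real s * sval s \<alpha> = real (\<alpha> 0) + sval s (\<lambda>n. \<alpha> (Suc n))"
    unfolding e using sp by (simp add: algebra_simps)
  then show ?thesis using sp by (simp add: eq_divide_eq mult.commute)
qed

lemma Ls_shift: "\<alpha> \<in> Ls s \<Longrightarrow> (\<lambda>n. \<alpha> (n + k)) \<in> Ls s" unfolding Ls_def by auto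

lemma sval_shift:
  assumes "s \<ge> 2" "\<alpha> \<in> Ls s"
  shows "sval s \<alpha> = (\<Sum>n<k. real (\<alpha> n) / real s ^ Suc n) + sval s (\<lambda>n. \<alpha> (n + k)) / real s ^ k"
proof -
  have "sval s (\<lambda>n. \<alpha> (n + k)) / real s ^ k = (\<Sum>n. real (\<alpha> (n + k)) / real s ^ Suc n / real s ^ k)"
    unfolding sval_def by (rule suminf_divide[symmetric]) (rule sval_summable[OF assms(1) Ls_shift[OF assms(2)]])
  also have "\<dots> = (\<Sum>n. real (\<alpha> (n + k)) / real s ^ Suc (n + k))"
    by (simp add: power_add field_simps)
  finally show ?thesis unfolding sval_def
    using suminf_split_initial_segment[OF sval_summable[OF assms], of k] by simp
qed


lemma Ls_Suc: "\<alpha> \<in> Ls s \<Longrightarrow> (\<lambda>n. \<alpha> (Suc n)) \<in> Ls s" unfolding Ls_def by auto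

lemma core0:
  assumes s: "s \<ge> 2" and a: "\<alpha> \<in> Ls s" "\<alpha>' \<in> Ls s" and lt: "\<alpha> 0 < \<alpha>' 0"
    and eq: "sval s \<alpha> = sval s \<alpha>'"
  shows "\<alpha>' 0 = Suc (\<alpha> 0) \<and> (\<forall>n. \<alpha> (Suc n) = s - 1 \<and> \<alpha>' (Suc n) = 0)"
proof -
  define S where "S = sval s (\<lambda>n. \<alpha> (Suc n))"
  define S' where "S' = sval s (\<lambda>n. \<alpha>' (Suc n))"
  have "(real (\<alpha> 0) + S) / real s = (real (\<alpha>' 0) + S') / real s"
    using eq sval_step[OF s a(1)] sval_step[OF s a(2)] unfolding S_def S'_def by simp
  then have e: "real (\<alpha> 0) + S = real (\<alpha>' 0) + S'" using s by (simp add: divide_cancel_right)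
  have S1: "S \<le> 1" unfolding S_def by (rule sval_le1_and_one_imp(1)[OF s Ls_Suc[OF a(1)]])
  have S0: "S' \<ge> 0" unfolding S'_def by (rule sval_nonneg[OF s Ls_Suc[OF a(2)]])
  have "real (\<alpha>' 0) \<ge> real (\<alpha> 0) + 1" using lt by linarith
  then have "S = 1" "S' = 0" "real (\<alpha>' 0) = real (\<alpha> 0) + 1" using e S1 S0 by linarith+
  then show ?thesis
    using sval_le1_and_one_imp(2)[OF s Ls_Suc[OF a(1)]] sval_zero_imp[OF s Ls_Suc[OF a(2)]]
    unfolding S_def S'_def by auto
qed

lemma core:
  assumes s: "s \<ge> 2" and a: "\<alpha> \<in> Ls s" "\<alpha>' \<in> Ls s" and ne: "\<alpha> \<noteq> \<alpha>'"
    and eq: "sval s \<alpha> = sval s \<alpha>'"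
  shows "\<exists>k. (\<forall>n<k. \<alpha> n = \<alpha>' n) \<and>
     ((\<alpha>' k = Suc (\<alpha> k) \<and> (\<forall>n. \<alpha> (Suc (n + k)) = s - 1 \<and> \<alpha>' (Suc (n + k)) = 0)) \<or>
      (\<alpha> k = Suc (\<alpha>' k) \<and> (\<forall>n. \<alpha>' (Suc (n + k)) = s - 1 \<and> \<alpha> (Suc (n + k)) = 0)))"
proof -
  obtain m where "\<alpha> m \<noteq> \<alpha>' m" using ne by auto
  define k where "k = (LEAST n. \<alpha> n \<noteq> \<alpha>' n)"
  have dk: "\<alpha> k \<noteq> \<alpha>' k" unfolding k_def by (rule LeastI) fact
  have pre: "\<forall>n<k. \<alpha> n = \<alpha>' n" unfolding k_def using not_less_Least by blast
  have ps: "(\<Sum>n<k. real (\<alpha> n) / real s ^ Suc n) = (\<Sum>n<k. real (\<alpha>' n) / real s ^ Suc n)"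
    using pre by (intro sum.cong) auto
  have "sval s (\<lambda>n. \<alpha> (n + k)) / real s ^ k = sval s (\<lambda>n. \<alpha>' (n + k)) / real s ^ k"
    using eq sval_shift[OF s a(1), of k] sval_shift[OF s a(2), of k] ps by simp
  then have e: "sval s (\<lambda>n. \<alpha> (n + k)) = sval s (\<lambda>n. \<alpha>' (n + k))" using s by simp
  show ?thesis
  proof (cases "\<alpha> k < \<alpha>' k")
    case True
    from core0[OF s Ls_shift[OF a(1)] Ls_shift[OF a(2)] _ e] True
    show ?thesis using pre by (intro exI[of _ k]) auto
  next
    case False
    then have "\<alpha>' k < \<alpha> k" using dk by simp
    from core0[OF s Ls_shift[OF a(2)] Ls_shift[OF a(1)] _ e[symmetric]] this
    show ?thesis using pre by (intro exI[of _ k]) auto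
  qed
qed

lemma beta_le1: "beta A0 \<alpha> n \<le> 1"
  by (induction n) auto

lemma beta_Ls: "beta A0 \<alpha> \<in> Ls 2"
  using beta_le1 unfolding Ls_def by (simp add: less_Suc_eq_le numeral_2_eq_2)

lemma beta_prefix: "(\<forall>i\<le>n. \<alpha> i = \<alpha>' i) \<Longrightarrow> beta A0 \<alpha> n = beta A0 \<alpha>' n"
  by (induction n) auto

lemma beta_tail:
  assumes "\<forall>m. \<alpha> (Suc (m + k)) = c" "c \<noteq> \<alpha> k"
  shows "beta A0 \<alpha> (Suc (m + k)) = 1 - beta A0 \<alpha> k"
proof (induction m)
  case 0
  have "\<alpha> (Suc k) = c" using assms(1)[rule_format, of 0] by simp
  then show ?case using assms(2) by simp
next
  case (Suc m)
  have "\<alpha> (Suc (Suc (m + k))) = c" "\<alpha> (Suc (m + k)) = c"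
    using assms(1)[rule_format, of "Suc m"] assms(1)[rule_format, of m] by simp_all
  then show ?case using Suc.IH by simp
qed

lemma sval_tail2:
  assumes "u \<le> 1" "\<beta> 0 = u" "\<forall>n. \<beta> (Suc n) = 1 - u"
  shows "sval 2 \<beta> = 1 / 2"
proof -
  have b1: "\<beta> n \<le> 1" for n by (cases n) (use assms in auto)
  have L: "\<beta> \<in> Ls 2" using b1 unfolding Ls_def by (simp add: less_Suc_eq_le numeral_2_eq_2)
  have "(\<lambda>n. \<beta> (Suc n)) = (\<lambda>_. 1 - u)" using assms by auto
  moreover have "sval 2 (\<lambda>_. 1 - u) = 1 - real u"
  proof (cases "u = 0")
    case True then show ?thesis using sval_const[of 2] by simp
  next
    case False then have "u = 1" using assms by simp
    then show ?thesis by (simp add: sval_def)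
  qed
  ultimately show ?thesis using sval_step[OF _ L] assms by simp
qed

lemma beta_val:
  assumes "\<forall>m. \<alpha> (Suc (m + k)) = c" "c \<noteq> \<alpha> k"
  shows "sval 2 (beta A0 \<alpha>) = (\<Sum>n<k. real (beta A0 \<alpha> n) / 2 ^ Suc n) + 1 / 2 ^ Suc k"
proof -
  have t: "sval 2 (\<lambda>n. beta A0 \<alpha> (n + k)) = 1 / 2"
    by (rule sval_tail2[where u="beta A0 \<alpha> k"]) (use beta_tail[OF assms] beta_le1 in auto)
  have sh: "sval 2 (beta A0 \<alpha>) = (\<Sum>n<k. real (beta A0 \<alpha> n) / 2 ^ Suc n) + sval 2 (\<lambda>n. beta A0 \<alpha> (n + k)) / 2 ^ k"
    using sval_shift[where s=2 and \<alpha>="beta A0 \<alpha>" and k=k] beta_Ls by simp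
  show ?thesis unfolding sh t by simp
qed

lemma welldef_aux:
  assumes s: "s \<ge> 2" and a: "\<alpha> \<in> Ls s" "\<alpha>' \<in> Ls s" and pre: "\<forall>n<k. \<alpha> n = \<alpha>' n"
    and c: "\<alpha>' k = Suc (\<alpha> k)" "\<forall>n. \<alpha> (Suc (n + k)) = s - 1 \<and> \<alpha>' (Suc (n + k)) = 0"
  shows "sval 2 (beta A0 \<alpha>) = sval 2 (beta A0 \<alpha>')"
proof -
  have "\<alpha>' k < s" using a(2) unfolding Ls_def by auto
  then have "s - 1 \<noteq> \<alpha> k" using c(1) by simp
  then have v1: "sval 2 (beta A0 \<alpha>) = (\<Sum>n<k. real (beta A0 \<alpha> n) / 2 ^ Suc n) + 1 / 2 ^ Suc k"
    using c(2) by (intro beta_val[of _ _ "s - 1"]) auto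
  have v2: "sval 2 (beta A0 \<alpha>') = (\<Sum>n<k. real (beta A0 \<alpha>' n) / 2 ^ Suc n) + 1 / 2 ^ Suc k"
    using c by (intro beta_val[of _ _ 0]) auto
  have "(\<Sum>n<k. real (beta A0 \<alpha> n) / 2 ^ Suc n) = (\<Sum>n<k. real (beta A0 \<alpha>' n) / 2 ^ Suc n)"
    using pre by (intro sum.cong refl) (subst beta_prefix[of _ \<alpha> \<alpha>'], auto)
  then show ?thesis using v1 v2 by simp
qed

lemma welldef:
  assumes s: "s \<ge> 2" and a: "\<alpha> \<in> Ls s" "\<alpha>' \<in> Ls s" and eq: "sval s \<alpha> = sval s \<alpha>'"
  shows "sval 2 (beta A0 \<alpha>) = sval 2 (beta A0 \<alpha>')"
proof (cases "\<alpha> = \<alpha>'")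
  case False
  from core[OF s a False eq] obtain k where pre: "\<forall>n<k. \<alpha> n = \<alpha>' n" and
    c: "(\<alpha>' k = Suc (\<alpha> k) \<and> (\<forall>n. \<alpha> (Suc (n + k)) = s - 1 \<and> \<alpha>' (Suc (n + k)) = 0)) \<or>
      (\<alpha> k = Suc (\<alpha>' k) \<and> (\<forall>n. \<alpha>' (Suc (n + k)) = s - 1 \<and> \<alpha> (Suc (n + k)) = 0))" by blast
  from c show ?thesis
  proof
    assume "\<alpha>' k = Suc (\<alpha> k) \<and> (\<forall>n. \<alpha> (Suc (n + k)) = s - 1 \<and> \<alpha>' (Suc (n + k)) = 0)"
    then show ?thesis using welldef_aux[OF s a pre] by blast
  next
    assume "\<alpha> k = Suc (\<alpha>' k) \<and> (\<forall>n. \<alpha>' (Suc (n + k)) = s - 1 \<and> \<alpha> (Suc (n + k)) = 0)"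
    then show ?thesis using welldef_aux[OF s a(2,1), of k A0] pre by auto
  qed
qed simp



lemma enc_inj: assumes "encoding_map h" shows "inj_on h {0..1}"
proof (rule inj_onI, rule ccontr)
  fix x y assume xy: "x \<in> {0..1}" "y \<in> {0..1}" "h x = h y" "x \<noteq> y"
  have m: "strict_mono_on {0..1} h \<or> (\<forall>x\<in>{0..1}. \<forall>y\<in>{0..1}. x < y \<longrightarrow> h y < h x)"
    using assms unfolding encoding_map_def by blast
  show False
  proof (cases "x < y")
    case True then show False using m xy strict_mono_onD[of "{0..1}" h x y] by force
  next
    case False then have "y < x" using xy by simp
    then show False using m xy strict_mono_onD[of "{0..1}" h y x] by force
  qed
qed

lemma enc_img: "encoding_map h \<Longrightarrow> h ` {0..1} = {0..1}" unfolding encoding_map_def by blast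

lemma sval_in: "s \<ge> 2 \<Longrightarrow> \<alpha> \<in> Ls s \<Longrightarrow> sval s \<alpha> \<in> {0..1}"
  using sval_nonneg sval_le1_and_one_imp(1) by auto

lemma fmap_eq:
  assumes s: "s \<ge> 2" and hs: "encoding_map hs" and a: "\<alpha> \<in> Ls s"
  shows "fmap s hs h2 A0 (DeltaS hs s \<alpha>) = Delta2 h2 (beta A0 \<alpha>)"
proof -
  define \<alpha>' where "\<alpha>' = (SOME \<alpha>'. \<alpha>' \<in> Ls s \<and> DeltaS hs s \<alpha>' = DeltaS hs s \<alpha>)"
  have "\<alpha>' \<in> Ls s \<and> DeltaS hs s \<alpha>' = DeltaS hs s \<alpha>"
    unfolding \<alpha>'_def by (rule someI[of _ \<alpha>]) (use a in auto)
  then have a': "\<alpha>' \<in> Ls s" and "hs (sval s \<alpha>') = hs (sval s \<alpha>)" unfolding DeltaS_def by auto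
  then have "sval s \<alpha>' = sval s \<alpha>"
    using enc_inj[OF hs] sval_in[OF s a] sval_in[OF s a'] by (meson inj_onD)
  then have "sval 2 (beta A0 \<alpha>') = sval 2 (beta A0 \<alpha>)" using welldef[OF s a' a] by simp
  then show ?thesis unfolding fmap_def \<alpha>'_def[symmetric] Delta2_def by simp
qed

lemma expansion:
  assumes b: "b \<ge> 2" and t: "t \<in> {0..1}"
  shows "\<exists>d\<in>Ls b. sval b d = t"
proof (cases "t = 1")
  case True
  then show ?thesis using sval_const[OF b] b by (intro bexI[of _ "\<lambda>_. b - 1"]) (auto simp: Ls_def)
next
  case False
  then have t0: "0 \<le> t" and t1: "t < 1" using t by auto
  have bp: "real b > 0" using b by simp
  define d where "d = (\<lambda>n. nat \<lfloor>real b ^ Suc n * t\<rfloor> mod b)"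
  have dL: "d \<in> Ls b" unfolding d_def Ls_def using b by auto
  have P: "(\<Sum>n<N. real (d n) / real b ^ Suc n) = real_of_int \<lfloor>real b ^ N * t\<rfloor> / real b ^ N" for N
  proof (induction N)
    case 0 then show ?case using t0 t1 by (simp add: floor_eq_iff)
  next
    case (Suc N)
    define x where "x = \<lfloor>real b ^ Suc N * t\<rfloor>"
    have x0: "x \<ge> 0" unfolding x_def using t0 by simp
    have "\<lfloor>real b ^ N * t\<rfloor> = \<lfloor>(real b ^ Suc N * t) / real_of_int (int b)\<rfloor>"
      using bp by simp
    also have "\<dots> = x div int b" unfolding x_def by (rule floor_divide_real_eq_div) simp
    finally have fx: "\<lfloor>real b ^ N * t\<rfloor> = x div int b" .
    have dN: "real (d N) = real_of_int (x mod int b)"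
    proof -
      have "d N = nat x mod b" unfolding d_def x_def by simp
      also have "\<dots> = nat (x mod int b)" using x0 by (simp add: nat_mod_distrib)
      finally show ?thesis using x0 b by simp
    qed
    have "x = int b * (x div int b) + x mod int b" by simp
    then have "real_of_int x = real b * real_of_int (x div int b) + real_of_int (x mod int b)"
      by (metis of_int_add of_int_mult of_int_of_nat_eq)
    then show ?case unfolding sum.lessThan_Suc Suc.IH fx dN x_def[symmetric]
      using bp by (simp add: field_simps)
  qed
  have lim: "(\<lambda>N. real_of_int \<lfloor>real b ^ N * t\<rfloor> / real b ^ N) \<longlonglongrightarrow> t"
  proof (rule tendsto_sandwich[of "\<lambda>N. t - (1 / real b) ^ N" _ _ "\<lambda>_. t"])
    show "\<forall>\<^sub>F N in sequentially. t - (1 / real b) ^ N \<le> real_of_int \<lfloor>real b ^ N * t\<rfloor> / real b ^ N"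
    proof (rule always_eventually, rule allI)
      fix N
      have "real b ^ N * t - 1 \<le> real_of_int \<lfloor>real b ^ N * t\<rfloor>" by linarith
      then have "(real b ^ N * t - 1) / real b ^ N \<le> real_of_int \<lfloor>real b ^ N * t\<rfloor> / real b ^ N"
        by (rule divide_right_mono) simp
      moreover have "t - (1 / real b) ^ N = (real b ^ N * t - 1) / real b ^ N"
        using bp by (simp add: field_simps power_one_over)
      ultimately show "t - (1 / real b) ^ N \<le> real_of_int \<lfloor>real b ^ N * t\<rfloor> / real b ^ N"
        by simp
    qed
    show "\<forall>\<^sub>F N in sequentially. real_of_int \<lfloor>real b ^ N * t\<rfloor> / real b ^ N \<le> t"
    proof (rule always_eventually, rule allI)
      fix N
      have "real_of_int \<lfloor>real b ^ N * t\<rfloor> \<le> real b ^ N * t" by linarith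
      then show "real_of_int \<lfloor>real b ^ N * t\<rfloor> / real b ^ N \<le> t"
        using bp by (simp add: field_simps)
    qed
    have "(\<lambda>N. (1 / real b) ^ N) \<longlonglongrightarrow> 0" using b by (intro LIMSEQ_power_zero) auto
    then show "(\<lambda>N. t - (1 / real b) ^ N) \<longlonglongrightarrow> t" using tendsto_diff[OF tendsto_const, of _ 0 sequentially t] by simp
    show "(\<lambda>_. t) \<longlonglongrightarrow> t" by simp
  qed
  have "(\<lambda>n. real (d n) / real b ^ Suc n) sums t" unfolding sums_def P using lim .
  then show ?thesis using dL unfolding sval_def by (intro bexI[of _ d]) (auto simp: sums_iff)
qed



definition oth :: "nat \<Rightarrow> nat" where "oth a = (if a = 0 then 1 else 0)"

fun build :: "nat list \<Rightarrow> nat \<Rightarrow> (nat \<Rightarrow> nat) \<Rightarrow> nat \<Rightarrow> nat" where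
  "build c a0 \<beta> 0 = (if c = [] then a0 else c ! 0)"
| "build c a0 \<beta> (Suc n) = (if Suc n < length c then c ! Suc n
     else if \<beta> (Suc n) = \<beta> n then build c a0 \<beta> n else oth (build c a0 \<beta> n))"

lemma build_Ls:
  assumes "s \<ge> 2" "set c \<subseteq> {..<s}" "a0 < s"
  shows "build c a0 \<beta> \<in> Ls s"
proof -
  have "build c a0 \<beta> n < s" for n
  proof (induction n)
    case 0 then show ?case using assms by (cases c) auto
  next
    case (Suc n)
    have "\<forall>i<length c. c ! i < s" using assms(2) nth_mem by fastforce
    then show ?case using Suc assms by (auto simp: oth_def)
  qed
  then show ?thesis unfolding Ls_def by auto
qed

lemma build_prefix: "n < length c \<Longrightarrow> build c a0 \<beta> n = c ! n"
  by (cases n) auto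

lemma Ls2_le1: "\<beta> \<in> Ls 2 \<Longrightarrow> \<beta> n \<le> 1" unfolding Ls_def by (simp add: less_Suc_eq_le numeral_2_eq_2)

lemma build_beta:
  assumes b: "\<beta> \<in> Ls 2" and pre: "\<forall>i<length c. beta A0 (build c a0 \<beta>) i = \<beta> i"
    and c0: "c = [] \<Longrightarrow> (a0 \<in> A0 \<longleftrightarrow> \<beta> 0 = 0)"
  shows "beta A0 (build c a0 \<beta>) n = \<beta> n"
proof (induction n)
  case 0
  show ?case
  proof (cases "c = []")
    case True then show ?thesis using c0 Ls2_le1[OF b, of 0] by auto
  next
    case False then show ?thesis using pre by auto
  qed
next
  case (Suc n)
  show ?case
  proof (cases "Suc n < length c")
    case True then show ?thesis using pre by blast
  next
    case False
    have l: "\<beta> n \<le> 1" "\<beta> (Suc n) \<le> 1" using Ls2_le1[OF b] by auto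
    show ?thesis
    proof (cases "\<beta> (Suc n) = \<beta> n")
      case True then show ?thesis using False Suc.IH by simp
    next
      case F2: False
      have "oth (build c a0 \<beta> n) \<noteq> build c a0 \<beta> n" unfolding oth_def by simp
      then show ?thesis using False F2 Suc.IH l by auto
    qed
  qed
qed

definition pick :: "nat \<Rightarrow> bool \<Rightarrow> nat" where
  "pick a q = (if q then (if a \<le> 1 then 2 else 1) else (if a = 0 then 1 else 0))"

fun gam :: "nat \<Rightarrow> (nat \<Rightarrow> bool) \<Rightarrow> nat \<Rightarrow> nat" where
  "gam a0 p 0 = a0"
| "gam a0 p (Suc n) = pick (gam a0 p n) (p n)"

lemma pick_ne: "pick a q \<noteq> a" unfolding pick_def by auto
lemma pick_inj: "pick a q = pick a q' \<Longrightarrow> q = q'" unfolding pick_def by (auto split: if_splits)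

lemma gam_Ls: "s > 2 \<Longrightarrow> a0 < s \<Longrightarrow> gam a0 p \<in> Ls s"
proof -
  assume s: "s > 2" "a0 < s"
  have "gam a0 p n < s" for n by (induction n) (use s in \<open>auto simp: pick_def\<close>)
  then show ?thesis unfolding Ls_def by auto
qed

lemma gam_inj: "gam a0 p = gam a0 p' \<Longrightarrow> p = p'"
proof
  fix n assume e: "gam a0 p = gam a0 p'"
  have "pick (gam a0 p n) (p n) = pick (gam a0 p n) (p' n)"
    using fun_cong[OF e, of "Suc n"] fun_cong[OF e, of n] by simp
  then show "p n = p' n" by (rule pick_inj)
qed

lemma gam_sval_inj:
  assumes s: "s > 2" "a0 < s" and e: "sval s (gam a0 p) = sval s (gam a0 p')"
  shows "gam a0 p = gam a0 p'"
proof (rule ccontr)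
  assume ne: "gam a0 p \<noteq> gam a0 p'"
  from core[OF _ gam_Ls[OF s] gam_Ls[OF s] ne e] s obtain k where
    "(\<forall>n. gam a0 p (Suc (n + k)) = s - 1 \<and> gam a0 p' (Suc (n + k)) = 0) \<or>
     (\<forall>n. gam a0 p' (Suc (n + k)) = s - 1 \<and> gam a0 p (Suc (n + k)) = 0)" by auto
  then have "gam a0 p (Suc (Suc k)) = gam a0 p (Suc k)"
    by (metis add_0 add_Suc)
  then show False using pick_ne by simp
qed

lemma gam_beta: "a0 \<in> A0 \<Longrightarrow> beta A0 (gam a0 p) n = n mod 2"
  apply (induction n)
   apply (auto simp: pick_ne)
  by presburger

lemma beta_const: "a0 \<in> A0 \<Longrightarrow> beta A0 (\<lambda>_. a0) n = 0"
  by (induction n) auto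



theorem theorem2:
  fixes s :: nat and A0 A1 :: "nat set" and hs h2 :: "real \<Rightarrow> real"
  assumes "s > 2"
    and "A0 \<inter> A1 = {}" and "A0 \<union> A1 = {..<s}" and "A0 \<noteq> {..<s}" and "A1 \<noteq> {..<s}"
    and "encoding_map hs" and "encoding_map h2"
  shows "(fmap s hs h2 A0 ` {0..1} = {0..1}) \<and>
         (\<forall>c. c \<noteq> [] \<and> set c \<subseteq> {..<s} \<longrightarrow>
           (\<exists>b. set b \<subseteq> {0,1} \<and> fmap s hs h2 A0 ` cylS hs s c = cyl2 h2 b)) \<and>
         (\<exists>y\<in>{0..1}. {x\<in>{0..1}. fmap s hs h2 A0 x = y} \<noteq> {} \<and>
           finite {x\<in>{0..1}. fmap s hs h2 A0 x = y}) \<and>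
         (\<exists>y\<in>{0..1}. {x\<in>{0..1}. fmap s hs h2 A0 x = y} \<approx> (UNIV :: real set))"
proof -
  have s2: "s \<ge> 2" using assms(1) by simp
  let ?f = "fmap s hs h2 A0"
  have "A0 \<noteq> {}"
  proof
    assume "A0 = {}"
    then have "A1 = {..<s}" using assms(3) by simp
    then show False using assms(5) by simp
  qed
  then obtain a0 where a0: "a0 \<in> A0" by blast
  have "A1 \<noteq> {}"
  proof
    assume "A1 = {}"
    then have "A0 = {..<s}" using assms(3) by simp
    then show False using assms(4) by simp
  qed
  then obtain a1 where a1: "a1 \<in> A1" by blast
  have "a0 \<in> A0 \<union> A1" "a1 \<in> A0 \<union> A1" using a0 a1 by simp_all
  then have "a0 \<in> {..<s}" "a1 \<in> {..<s}" unfolding assms(3) .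
  then have a0s: "a0 < s" and a1s: "a1 < s" by simp_all
  have a1n: "a1 \<notin> A0" using a1 assms(2) by auto
  have hsimg: "hs ` {0..1} = {0..1}" and h2img: "h2 ` {0..1} = {0..1}"
    using enc_img assms(6,7) by auto
  have hsinj: "inj_on hs {0..1}" and h2inj: "inj_on h2 {0..1}" using enc_inj assms(6,7) by auto
  have code: "\<exists>\<alpha>\<in>Ls s. DeltaS hs s \<alpha> = x" if "x \<in> {0..1}" for x
  proof -
    have "x \<in> hs ` {0..1}" using that hsimg by simp
    then obtain t where t: "t \<in> {0..1}" "x = hs t" by (rule imageE) simp
    obtain d where "d \<in> Ls s" "sval s d = t" using expansion[OF s2 t(1)] by blast
    then show ?thesis using t unfolding DeltaS_def by blast
  qed
  have fv: "\<exists>\<alpha>\<in>Ls s. x = DeltaS hs s \<alpha> \<and> ?f x = Delta2 h2 (beta A0 \<alpha>)" if xin: "x \<in> {0..1}" for x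
  proof -
    obtain \<alpha> where a: "\<alpha> \<in> Ls s" "DeltaS hs s \<alpha> = x" using code[OF xin] by blast
    then have "?f x = Delta2 h2 (beta A0 \<alpha>)" using fmap_eq[OF s2 assms(6) a(1)] by simp
    then show ?thesis using a by blast
  qed
  have D2in: "\<beta> \<in> Ls 2 \<Longrightarrow> Delta2 h2 \<beta> \<in> {0..1}" for \<beta>
  proof -
    assume "\<beta> \<in> Ls 2"
    then have "h2 (sval 2 \<beta>) \<in> h2 ` {0..1}" using sval_in[of 2 \<beta>] by simp
    then show ?thesis unfolding Delta2_def h2img .
  qed
  have DSin: "\<alpha> \<in> Ls s \<Longrightarrow> DeltaS hs s \<alpha> \<in> {0..1}" for \<alpha>
  proof -
    assume "\<alpha> \<in> Ls s"
    then have "hs (sval s \<alpha>) \<in> hs ` {0..1}" using sval_in[OF s2, of \<alpha>] by simp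
    then show ?thesis unfolding DeltaS_def hsimg .
  qed

  have P1: "?f ` {0..1} = {0..1}"
  proof
    show "?f ` {0..1} \<subseteq> {0..1}"
    proof
      fix z assume "z \<in> ?f ` {0..1}"
      then obtain x where x: "x \<in> {0..1}" "z = ?f x" by blast
      obtain \<alpha> where "?f x = Delta2 h2 (beta A0 \<alpha>)" using fv[OF x(1)] by blast
      then show "z \<in> {0..1}" using x(2) D2in[OF beta_Ls] by simp
    qed
    show "{0..1} \<subseteq> ?f ` {0..1}"
    proof
      fix y :: real assume y: "y \<in> {0..1}"
      have "y \<in> h2 ` {0..1}" using y h2img by simp
      then obtain t where t: "t \<in> {0..1}" "y = h2 t" by (rule imageE) simp
      obtain \<beta> where b: "\<beta> \<in> Ls 2" "sval 2 \<beta> = t" using expansion[of 2 t] t(1) by auto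
      define a where "a = (if \<beta> 0 = 0 then a0 else a1)"
      define \<alpha> where "\<alpha> = build [] a \<beta>"
      have aL: "\<alpha> \<in> Ls s" unfolding \<alpha>_def by (rule build_Ls) (use s2 a0s a1s a_def in auto)
      have "beta A0 \<alpha> n = \<beta> n" for n
        unfolding \<alpha>_def by (rule build_beta[OF b(1)]) (use a0 a1n a_def in auto)
      then have "beta A0 \<alpha> = \<beta>" by auto
      then have "?f (DeltaS hs s \<alpha>) = y" using fmap_eq[OF s2 assms(6) aL] b t unfolding Delta2_def by simp
      then show "y \<in> ?f ` {0..1}" using DSin[OF aL] by (intro image_eqI[where x="DeltaS hs s \<alpha>"]) auto
    qed
  qed

  have P2: "\<forall>c. c \<noteq> [] \<and> set c \<subseteq> {..<s} \<longrightarrow>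
           (\<exists>b. set b \<subseteq> {0,1} \<and> ?f ` cylS hs s c = cyl2 h2 b)"
  proof (intro allI impI)
    fix c :: "nat list" assume c: "c \<noteq> [] \<and> set c \<subseteq> {..<s}"
    define cf where "cf = (\<lambda>n. if n < length c then c ! n else 0)"
    define b where "b = map (beta A0 cf) [0..<length c]"
    have lb: "length b = length c" unfolding b_def by simp
    have bi: "i < length c \<Longrightarrow> b ! i = beta A0 cf i" for i unfolding b_def by simp
    have pre: "(\<forall>i<length c. \<alpha> i = c ! i) \<Longrightarrow> i < length c \<Longrightarrow> beta A0 \<alpha> i = b ! i" for \<alpha> i
      using bi[of i] beta_prefix[of i \<alpha> cf A0] unfolding cf_def by auto
    show "\<exists>b. set b \<subseteq> {0,1} \<and> ?f ` cylS hs s c = cyl2 h2 b"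
    proof (intro exI conjI)
      have "beta A0 cf n = 0 \<or> beta A0 cf n = 1" for n using beta_le1[of A0 cf n] by arith
      then show "set b \<subseteq> {0,1}" unfolding b_def set_map by (intro image_subsetI) simp
      show "?f ` cylS hs s c = cyl2 h2 b"
      proof
        show "?f ` cylS hs s c \<subseteq> cyl2 h2 b"
        proof
          fix y assume "y \<in> ?f ` cylS hs s c"
          then obtain \<alpha> where a: "\<alpha> \<in> Ls s" "\<forall>i<length c. \<alpha> i = c ! i" "y = ?f (DeltaS hs s \<alpha>)"
            unfolding cylS_def by auto
          have "y = Delta2 h2 (beta A0 \<alpha>)" using a fmap_eq[OF s2 assms(6)] by simp
          then show "y \<in> cyl2 h2 b" unfolding cyl2_def using beta_Ls pre[OF a(2)] lb by auto
        qed
        show "cyl2 h2 b \<subseteq> ?f ` cylS hs s c"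
        proof
          fix y assume "y \<in> cyl2 h2 b"
          then obtain \<beta> where bb: "\<beta> \<in> Ls 2" "\<forall>i<length b. \<beta> i = b ! i" "y = Delta2 h2 \<beta>"
            unfolding cyl2_def by auto
          define \<alpha> where "\<alpha> = build c 0 \<beta>"
          have aL: "\<alpha> \<in> Ls s" unfolding \<alpha>_def by (rule build_Ls) (use s2 c in auto)
          have ap: "\<forall>i<length c. \<alpha> i = c ! i" unfolding \<alpha>_def using build_prefix by auto
          have "beta A0 \<alpha> n = \<beta> n" for n
            unfolding \<alpha>_def by (rule build_beta[OF bb(1)]) (use pre[OF ap] bb(2) lb c in \<open>auto simp: \<alpha>_def\<close>)
          then have "beta A0 \<alpha> = \<beta>" by auto
          then have "y = ?f (DeltaS hs s \<alpha>)" using fmap_eq[OF s2 assms(6) aL] bb by simp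
          moreover have "DeltaS hs s \<alpha> \<in> cylS hs s c" unfolding cylS_def using aL ap by auto
          ultimately show "y \<in> ?f ` cylS hs s c" by blast
        qed
      qed
    qed
  qed

  have P3: "\<exists>y\<in>{0..1}. {x\<in>{0..1}. ?f x = y} \<noteq> {} \<and> finite {x\<in>{0..1}. ?f x = y}"
  proof (intro bexI conjI)
    have cL: "(\<lambda>_. a0) \<in> Ls s" using a0s unfolding Ls_def by simp
    have "beta A0 (\<lambda>_. a0) = (\<lambda>_. 0)" using beta_const[OF a0] by auto
    then have "?f (DeltaS hs s (\<lambda>_. a0)) = h2 0"
      using fmap_eq[OF s2 assms(6) cL] unfolding Delta2_def by (simp add: sval_def)
    then show "{x\<in>{0..1}. ?f x = h2 0} \<noteq> {}" using DSin[OF cL] by blast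
    have "h2 0 \<in> h2 ` {0..1}" by simp
    then show "h2 0 \<in> {0..1}" unfolding h2img .
    have "{x\<in>{0..1}. ?f x = h2 0} \<subseteq> (\<lambda>a. DeltaS hs s (\<lambda>_. a)) ` {..<s}"
    proof
      fix x assume x: "x \<in> {x\<in>{0..1}. ?f x = h2 0}"
      then obtain \<alpha> where a: "\<alpha> \<in> Ls s" "x = DeltaS hs s \<alpha>" "?f x = Delta2 h2 (beta A0 \<alpha>)"
        using fv by blast
      have "h2 (sval 2 (beta A0 \<alpha>)) = h2 0" using a x unfolding Delta2_def by simp
      then have "sval 2 (beta A0 \<alpha>) = 0"
        using h2inj sval_in[of 2 "beta A0 \<alpha>"] beta_Ls by (auto dest: inj_onD)
      then have z: "beta A0 \<alpha> n = 0" for n using sval_zero_imp[of 2 "beta A0 \<alpha>"] beta_Ls by auto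
      have st: "\<alpha> (Suc n) = \<alpha> n" for n
      proof (rule ccontr)
        assume "\<alpha> (Suc n) \<noteq> \<alpha> n"
        then have "beta A0 \<alpha> (Suc n) = 1 - beta A0 \<alpha> n" by simp
        then show False using z[of n] z[of "Suc n"] by simp
      qed
      have "\<alpha> n = \<alpha> 0" for n by (induction n) (use st in auto)
      then have "\<alpha> = (\<lambda>_. \<alpha> 0)" by auto
      moreover have "\<alpha> 0 < s" using a(1) unfolding Ls_def by auto
      ultimately show "x \<in> (\<lambda>a. DeltaS hs s (\<lambda>_. a)) ` {..<s}" using a(2)
        by (intro image_eqI[where x="\<alpha> 0"]) auto
    qed
    then show "finite {x\<in>{0..1}. ?f x = h2 0}" by (rule finite_subset) simp
  qed

  have P4: "\<exists>y\<in>{0..1}. {x\<in>{0..1}. ?f x = y} \<approx> (UNIV :: real set)"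
  proof (intro bexI)
    define y where "y = Delta2 h2 (\<lambda>n. n mod 2)"
    have mL: "(\<lambda>n. n mod 2) \<in> Ls 2" unfolding Ls_def by simp
    show "y \<in> {0..1}" unfolding y_def by (rule D2in[OF mL])
    define \<phi> where "\<phi> r = arctan r / pi + 1 / 2" for r
    have \<phi>in: "\<phi> r \<in> {0..1}" for r
    proof -
      have "-(pi/2) < arctan r" "arctan r < pi/2" using arctan_bounded[of r] by auto
      then have "-(1/2) < arctan r / pi" "arctan r / pi < 1/2" using pi_gt_zero by (simp_all add: field_simps)
      then have "0 \<le> arctan r / pi + 1 / 2" "arctan r / pi + 1 / 2 \<le> 1" by linarith+
      then show ?thesis unfolding \<phi>_def by simp
    qed
    have \<phi>inj: "\<phi> r = \<phi> r' \<Longrightarrow> r = r'" for r r'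
      unfolding \<phi>_def using pi_gt_zero arctan_eq_iff by auto
    define dig where "dig t = (SOME d. d \<in> Ls 2 \<and> sval 2 d = t)" for t
    have dig: "dig t \<in> Ls 2 \<and> sval 2 (dig t) = t" if "t \<in> {0..1}" for t
    proof -
      have "\<exists>d. d \<in> Ls 2 \<and> sval 2 d = t" using expansion[of 2 t] that by auto
      then show ?thesis unfolding dig_def by (rule someI_ex)
    qed
    define g where "g r = DeltaS hs s (gam a0 (\<lambda>n. dig (\<phi> r) n = 1))" for r
    have "(UNIV :: real set) \<lesssim> {x\<in>{0..1}. ?f x = y}"
      unfolding lepoll_def
    proof (intro exI conjI)
      show "inj_on g UNIV"
      proof (rule inj_onI)
        fix r r' assume "r \<in> UNIV" "r' \<in> UNIV" and e: "g r = g r'"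
        let ?p = "\<lambda>n. dig (\<phi> r) n = 1" and ?p' = "\<lambda>n. dig (\<phi> r') n = 1"
        have "hs (sval s (gam a0 ?p)) = hs (sval s (gam a0 ?p'))" using e unfolding g_def DeltaS_def .
        then have "sval s (gam a0 ?p) = sval s (gam a0 ?p')"
          using hsinj sval_in[OF s2 gam_Ls[OF assms(1) a0s]] by (meson inj_onD)
        then have "gam a0 ?p = gam a0 ?p'" by (rule gam_sval_inj[OF assms(1) a0s])
        then have pp: "?p = ?p'" by (rule gam_inj)
        have "dig (\<phi> r) n = dig (\<phi> r') n" for n
        proof -
          have "dig (\<phi> r) n \<le> 1" "dig (\<phi> r') n \<le> 1" using dig[OF \<phi>in] Ls2_le1 by blast+
          moreover have "(dig (\<phi> r) n = 1) = (dig (\<phi> r') n = 1)" using fun_cong[OF pp, of n] .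
          ultimately show ?thesis by arith
        qed
        then have "dig (\<phi> r) = dig (\<phi> r')" by auto
        then have "\<phi> r = \<phi> r'" using dig[OF \<phi>in[of r]] dig[OF \<phi>in[of r']] by metis
        then show "r = r'" by (rule \<phi>inj)
      qed
      show "g ` UNIV \<subseteq> {x\<in>{0..1}. ?f x = y}"
      proof clarify
        fix r
        let ?p = "\<lambda>n. dig (\<phi> r) n = 1"
        have gL: "gam a0 ?p \<in> Ls s" by (rule gam_Ls[OF assms(1) a0s])
        have "beta A0 (gam a0 ?p) = (\<lambda>n. n mod 2)" using gam_beta[OF a0] by auto
        then show "g r \<in> {0..1} \<and> ?f (g r) = y"
          unfolding g_def y_def using DSin[OF gL] fmap_eq[OF s2 assms(6) gL] by simp
      qed
    qed
    moreover have "{x\<in>{0..1}. ?f x = y} \<lesssim> (UNIV :: real set)" by (rule subset_imp_lepoll) simp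
    ultimately show "{x\<in>{0..1}. ?f x = y} \<approx> (UNIV :: real set)" by (intro lepoll_antisym)
  qed
  show ?thesis by (rule conjI[OF P1 conjI[OF P2 conjI[OF P3 P4]]])
qed

end
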